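(* Let $p$ be an SCF rationalizable within the class of Fechnerian RUMs, and let $x,y\in X$. If $(x,y)\in T(R^s\cup R^f)$, then every Fechnerian RUM $(u,g)$ rationalizing $p$ satisfies $u(x)\geq u(y)$. If $(x,y)\in T_P(R^s\cup R^f)$, then every such model satisfies $u(x)>u(y)$.
   Context: $X$ is a finite set of options; $C=\{(x,y): x,y\in X,\ x\neq y\}$; $D\subseteq C$ is a fixed non-empty set with $(x,y)\in D\Rightarrow (y,x)\in D$. An SCF $p$ assigns to each $(x,y)\in D$ a number $p(x,y)>0$ with $p(x,y)+p(y,x)=1$. A RUM is a pair $(u,g)$ with $u:X\to\mathbb{R}$ and $g$ assigning to each $(x,y)\in C$ a density $g(x,y)$ on $\mathbb{R}$ (cdf $G(x,y)$) with $\int v\,g(x,y)(v)\,dv=u(x)-u(y)=:v(x,y)$, $g(x,y)(v)=g(y,x)(-v)$ for all $v$, and connected support. It rationalizes $p$ if $G(x,y)(0)=p(y,x)$ for all $(x,y)\in D$. A RUM is Fechnerian if there is a density $g$ on $\mathbb{R}$ with $g(\delta)=g(-\delta)>0$ for all $\delta\geq0$ such that $g(x,y)(v)=g(v-v(x,y))$ for all $(x,y)\in C$, $v\in\mathbb{R}$. Relations on $X$: $(x,y)\in R^s$ iff $x=y$, or $(x,y)\in D$ and $p(x,y)\geq p(y,x)$; $(x,y)\in R^f$ iff $(x,y)\in C\setminus D$ and there exists $z\in X$ with $(x,z),(y,z)\in D$ and $p(x,z)\geq p(y,z)$. For a binary relation $R$, $T(R)$ is its transitive closure ($(x,y)\in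 T(R)$ iff there is a sequence $x_1=x,\dots,x_n=y$, $n\geq2$, with consecutive pairs in $R$) and $T_P(R)$ the asymmetric part of $T(R)$. *)

theory Defs
  imports "HOL-Analysis.Analysis"
begin

definition pairs_C :: "'a set \<Rightarrow> ('a \<times> 'a) set" where
  "pairs_C X = {(x, y). x \<in> X \<and> y \<in> X \<and> x \<noteq> y}"

definition valid_domain :: "'a set \<Rightarrow> ('a \<times> 'a) set \<Rightarrow> bool" where
  "valid_domain X D \<longleftrightarrow> finite X \<and> D \<subseteq> pairs_C X \<and> D \<noteq> {} \<and>
     (\<forall>x y. (x, y) \<in> D \<longrightarrow> (y, x) \<in> D)"

definition is_SCF :: "('a \<times> 'a) set \<Rightarrow> ('a \<Rightarrow> 'a \<Rightarrow> real) \<Rightarrow> bool" where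
  "is_SCF D p \<longleftrightarrow> (\<forall>x y. (x, y) \<in> D \<longrightarrow> p x y > 0 \<and> p x y + p y x = 1)"

definition is_density :: "(real \<Rightarrow> real) \<Rightarrow> bool" where
  "is_density f \<longleftrightarrow> f \<in> borel_measurable lborel \<and> (\<forall>v. 0 \<le> f v) \<and>
     integrable lborel f \<and> integral\<^sup>L lborel f = 1"

definition dens_support :: "(real \<Rightarrow> real) \<Rightarrow> real set" where
  "dens_support f = closure {v. f v > 0}"

definition cdf_of :: "(real \<Rightarrow> real) \<Rightarrow> real \<Rightarrow> real" where
  "cdf_of f t = (LINT v:{..t}|lborel. f v)"

definition is_RUM :: "'a set \<Rightarrow> ('a \<Rightarrow> real) \<Rightarrow> ('a \<Rightarrow> 'a \<Rightarrow> real \<Rightarrow> real) \<Rightarrow> bool" where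
  "is_RUM X u g \<longleftrightarrow> (\<forall>(x, y) \<in> pairs_C X.
      is_density (g x y) \<and>
      integrable lborel (\<lambda>v. v * g x y v) \<and>
      (\<integral>v. v * g x y v \<partial>lborel) = u x - u y \<and>
      (\<forall>v. g x y v = g y x (- v)) \<and>
      connected (dens_support (g x y)))"

definition is_Fechnerian_RUM :: "'a set \<Rightarrow> ('a \<Rightarrow> real) \<Rightarrow> ('a \<Rightarrow> 'a \<Rightarrow> real \<Rightarrow> real) \<Rightarrow> bool" where
  "is_Fechnerian_RUM X u g \<longleftrightarrow> is_RUM X u g \<and>
     (\<exists>g0. is_density g0 \<and> (\<forall>\<delta>\<ge>0. g0 \<delta> = g0 (- \<delta>) \<and> g0 \<delta> > 0) \<and>
        (\<forall>(x, y) \<in> pairs_C X. \<forall>v. g x y v = g0 (v - (u x - u y))))"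

definition rationalizes :: "('a \<times> 'a) set \<Rightarrow> ('a \<Rightarrow> 'a \<Rightarrow> real \<Rightarrow> real) \<Rightarrow> ('a \<Rightarrow> 'a \<Rightarrow> real) \<Rightarrow> bool" where
  "rationalizes D g p \<longleftrightarrow> (\<forall>x y. (x, y) \<in> D \<longrightarrow> cdf_of (g x y) 0 = p y x)"

definition R_s :: "'a set \<Rightarrow> ('a \<times> 'a) set \<Rightarrow> ('a \<Rightarrow> 'a \<Rightarrow> real) \<Rightarrow> ('a \<times> 'a) set" where
  "R_s X D p = {(x, y). x \<in> X \<and> y \<in> X \<and> (x = y \<or> ((x, y) \<in> D \<and> p x y \<ge> p y x))}"

definition R_f :: "'a set \<Rightarrow> ('a \<times> 'a) set \<Rightarrow> ('a \<Rightarrow> 'a \<Rightarrow> real) \<Rightarrow> ('a \<times> 'a) set" where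
  "R_f X D p = {(x, y). (x, y) \<in> pairs_C X - D \<and>
      (\<exists>z \<in> X. (x, z) \<in> D \<and> (y, z) \<in> D \<and> p x z \<ge> p y z)}"

definition T_cl :: "('a \<times> 'a) set \<Rightarrow> ('a \<times> 'a) set" where
  "T_cl R = trancl R"

definition T_P :: "('a \<times> 'a) set \<Rightarrow> ('a \<times> 'a) set" where
  "T_P R = {(x, y). (x, y) \<in> T_cl R \<and> (y, x) \<notin> T_cl R}"

end

theory Submission
  imports Defs
begin

lemma shift_int:
  fixes g0 :: "real \<Rightarrow> real"
  shows "(LINT v:{..t}|lborel. g0 (v - d)) = (LINT w:{..t-d}|lborel. g0 w)"
proof -
  have "(LINT v:{..t}|lborel. g0 (v - d)) = (\<integral>v. indicator {..t} v *\<^sub>R g0 (v - d) \<partial>lborel)"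
    by (simp add: set_lebesgue_integral_def)
  also have "\<dots> = \<bar>1\<bar> *\<^sub>R (\<integral>w. indicator {..t} (d + 1 * w) *\<^sub>R g0 ((d + 1 * w) - d) \<partial>lborel)"
    by (rule lborel_integral_real_affine) simp
  also have "\<dots> = (\<integral>w. indicator {..t-d} w *\<^sub>R g0 w \<partial>lborel)"
  proof -
    have "(\<lambda>w. indicator {..t} (d + 1 * w) *\<^sub>R g0 ((d + 1 * w) - d)) = (\<lambda>w. indicator {..t-d} w *\<^sub>R g0 w)"
      by (auto simp: indicator_def fun_eq_iff)
    then show ?thesis by simp
  qed
  finally show ?thesis by (simp add: set_lebesgue_integral_def)
qed

lemma strict_cdf:
  fixes g0 :: "real \<Rightarrow> real"
  assumes d: "is_density g0" and pos: "\<And>v. g0 v > 0" and ab: "a < b"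
  shows "(LINT w:{..a}|lborel. g0 w) < (LINT w:{..b}|lborel. g0 w)"
proof -
  have int: "integrable lborel g0" and meas[measurable]: "g0 \<in> borel_measurable lborel"
    using d by (auto simp: is_density_def)
  have si: "set_integrable lborel A g0" if "A \<in> sets lborel" for A
    unfolding set_integrable_def using integrable_mult_indicator[OF that int] .
  have un: "{..b} = {..a} \<union> {a<..b}" using ab by auto
  have eq: "(LINT w:{..b}|lborel. g0 w) = (LINT w:{..a}|lborel. g0 w) + (LINT w:{a<..b}|lborel. g0 w)"
    unfolding un by (rule set_integral_Un) (auto intro!: si)
  have ne: "(LINT w:{a<..b}|lborel. g0 w) \<noteq> 0"
  proof
    assume "(LINT w:{a<..b}|lborel. g0 w) = 0"
    hence "AE x in lborel. indicator {a<..b} x *\<^sub>R g0 x = 0"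
      unfolding set_lebesgue_integral_def
      using integral_nonneg_eq_0_iff_AE[of lborel "\<lambda>x. indicator {a<..b} x *\<^sub>R g0 x"]
        integrable_mult_indicator[OF _ int, of "{a<..b}"] pos
      by (simp add: less_imp_le)
    hence "AE x in lborel. x \<notin> {a<..b}"
      by (rule AE_mp) (auto intro!: AE_I2 simp: indicator_def pos[THEN less_imp_neq, symmetric])
    hence "emeasure lborel {x \<in> space lborel. \<not> x \<notin> {a<..b}} = 0"
      by (subst (asm) AE_iff_measurable[OF _ refl]) auto
    moreover have "{x \<in> space lborel. \<not> x \<notin> {a<..b}} = {a<..b}" by auto
    ultimately show False using ab by simp
  qed
  have "(LINT w:{a<..b}|lborel. g0 w) \<ge> 0"
    unfolding set_lebesgue_integral_def
    by (rule Bochner_Integration.integral_nonneg) (auto simp: indicator_def intro: less_imp_le pos)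
  with ne eq show ?thesis by simp
qed

lemma per_model:
  fixes X :: "'a set" and D :: "('a \<times> 'a) set" and p :: "'a \<Rightarrow> 'a \<Rightarrow> real"
  assumes vd: "valid_domain X D" and F: "is_Fechnerian_RUM X u g" and rat: "rationalizes D g p"
  defines "R \<equiv> R_s X D p \<union> R_f X D p"
  shows "(x, y) \<in> trancl R \<Longrightarrow> u y \<le> u x"
    and "(x, y) \<in> trancl R \<Longrightarrow> u x = u y \<Longrightarrow> (y, x) \<in> trancl R"
proof -
  obtain g0 where d: "is_density g0" and sym0: "\<forall>\<delta>\<ge>0. g0 \<delta> = g0 (- \<delta>) \<and> g0 \<delta> > 0"
    and gg: "\<forall>(x, y) \<in> pairs_C X. \<forall>v. g x y v = g0 (v - (u x - u y))"
    using F unfolding is_Fechnerian_RUM_def by blast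
  have pos: "g0 v > 0" for v
  proof (cases "v \<ge> 0")
    case True then show ?thesis using sym0 by auto
  next
    case False then have "-v \<ge> 0" by simp
    then have "g0 (-v) = g0 (- (-v)) \<and> g0 (-v) > 0" using sym0 by blast
    then show ?thesis by simp
  qed
  define Fc where "Fc t = (LINT w:{..t}|lborel. g0 w)" for t
  have DC: "D \<subseteq> pairs_C X" and Dsym: "\<And>a b. (a, b) \<in> D \<Longrightarrow> (b, a) \<in> D"
    using vd by (auto simp: valid_domain_def)
  have key: "p b a = Fc (u b - u a)" if "(a, b) \<in> D" for a b
  proof -
    have "p b a = cdf_of (g a b) 0" using rat that by (simp add: rationalizes_def)
    also have "\<dots> = (LINT v:{..0}|lborel. g0 (v - (u a - u b)))"
    proof -
      have "(a, b) \<in> pairs_C X" using DC that by blast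
      then have "\<forall>v. g a b v = g0 (v - (u a - u b))" using gg by fastforce
      then have "g a b = (\<lambda>v. g0 (v - (u a - u b)))" by (simp add: fun_eq_iff)
      then show ?thesis unfolding cdf_of_def by simp
    qed
    also have "\<dots> = Fc (0 - (u a - u b))" unfolding Fc_def by (rule shift_int)
    finally show ?thesis by simp
  qed
  have mono: "t \<le> s" if "Fc t \<le> Fc s" for s t
    using strict_cdf[OF d pos, of s t] that unfolding Fc_def by force
  have stepR: "u b \<le> u a" if "(a, b) \<in> R" for a b
  proof -
    { assume "(a, b) \<in> D" "p a b \<ge> p b a"
      then have "u b - u a \<le> u a - u b" using key[of a b] key[of b a] Dsym mono by metis
      then have ?thesis by simp }
    moreover
    { fix z assume "(a, z) \<in> D" "(b, z) \<in> D" "p a z \<ge> p b z"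
      then have "u b - u z \<le> u a - u z" using key[of z a] key[of z b] Dsym mono by metis
      then have ?thesis by simp }
    ultimately show ?thesis using that unfolding R_def R_s_def R_f_def by blast
  qed
  have rev: "(b, a) \<in> R" if "(a, b) \<in> R" "u a = u b" for a b
  proof -
    { assume "(a, b) \<in> D" "a \<in> X" "b \<in> X"
      then have "(b, a) \<in> R_s X D p" using key[of a b] key[of b a] Dsym that(2)
        unfolding R_s_def by auto }
    moreover
    { fix z assume "(a, b) \<in> pairs_C X - D" "z \<in> X" "(a, z) \<in> D" "(b, z) \<in> D"
      then have "(b, a) \<in> R_f X D p" using key[of z a] key[of z b] Dsym that(2)
        unfolding R_f_def pairs_C_def by auto }
    moreover
    { assume "a = b" "a \<in> X" then have "(b, a) \<in> R_s X D p" unfolding R_s_def by auto }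
    ultimately show ?thesis using that unfolding R_def R_s_def R_f_def by blast
  qed
  show tr: "u y \<le> u x" if "(x, y) \<in> trancl R" for x y
    using that by (induction rule: trancl_induct) (auto dest: stepR)
  define R' where "R' = {(a, b). (a, b) \<in> R \<and> u a = u b}"
  have "(x, y) \<in> trancl R'" if "(x, y) \<in> trancl R" "u x = u y" for y
    using that
  proof (induction rule: trancl_induct)
    case (base y) then show ?case unfolding R'_def by auto
  next
    case (step b c)
    have "u c \<le> u b" using step.hyps(2) by (rule stepR)
    moreover have "u b \<le> u x" using tr step.hyps(1) by blast
    ultimately have "u b = u x" using step.prems by simp
    with step show ?case unfolding R'_def by (auto intro: trancl_into_trancl)
  qed
  moreover have "sym R'" unfolding R'_def sym_def using rev by auto
  moreover have "R' \<subseteq> R" unfolding R'_def by auto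
  ultimately show "(y, x) \<in> trancl R" if "(x, y) \<in> trancl R" "u x = u y"
    using that by (metis sym_trancl symD trancl_mono)
qed

theorem corollary5:
  fixes X :: "'a set" and D :: "('a \<times> 'a) set" and p :: "'a \<Rightarrow> 'a \<Rightarrow> real"
    and x y :: 'a
  assumes "valid_domain X D"
    and "is_SCF D p"
    and "\<exists>u g. is_Fechnerian_RUM X u g \<and> rationalizes D g p"
    and "x \<in> X" and "y \<in> X"
  shows "((x, y) \<in> T_cl (R_s X D p \<union> R_f X D p) \<longrightarrow>
           (\<forall>u g. is_Fechnerian_RUM X u g \<and> rationalizes D g p \<longrightarrow> u x \<ge> u y)) \<and>
         ((x, y) \<in> T_P (R_s X D p \<union> R_f X D p) \<longrightarrow>
           (\<forall>u g. is_Fechnerian_RUM X u g \<and> rationalizes D g p \<longrightarrow> u x > u y))"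
  using per_model[OF assms(1)] unfolding T_P_def T_cl_def
  by (smt (verit) case_prodD mem_Collect_eq)

end
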